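(* Let $m \ge 2$, $n \ge 2$, and for $1 \le i \le m$ let $f_i(x) = x^T A_i x + c_i^T x + d_i$ be quadratics on $\mathbb{R}^n$ with $A_i$ symmetric, where $f_1(x) = \|x\|^2 - 1$. For $2 \le i \le m$ let $U_i > 0$ satisfy $|f_i(x)| \le U_i$ for all $x$ with $\|x\|^2 \le 2$. Then the system $f_i(x) \le 0$, $1 \le i \le m$, is feasible if and only if the following system in the real variables $v_0, x_1,\ldots,x_n, s_1,\ldots,s_m, w_2,\ldots,w_m$ is feasible: $$x^T A_i x + c_i^T v_0 x + d_i v_0^2 + s_i^2 = 0, \quad 1 \le i \le m,$$ $$\frac{s_i^2 + w_i^2}{U_i} - v_0^2 = 0, \quad 2 \le i \le m,$$ $$\|x\|^2 + s_1^2 + \sum_{i=2}^m \frac{s_i^2 + w_i^2}{U_i} + v_0^2 = m+1.$$ *)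

theory Defs
  imports "HOL-Analysis.Analysis"
begin

definition quad :: "real^'n^'n \<Rightarrow> real^'n \<Rightarrow> real \<Rightarrow> real^'n \<Rightarrow> real" where
  "quad A c d x = x \<bullet> (A *v x) + c \<bullet> x + d"

end

theory Submission
  imports Defs
begin

lemma quad_scale: "quad A c d (v *\<^sub>R x) = v^2 * (x \<bullet> (A *v x)) + v * (c \<bullet> x) + d"
  unfolding quad_def by (simp add: matrix_vector_mult_scaleR power2_eq_square)

lemma quad_neg: "quad A c d (-x) = x \<bullet> (A *v x) - c \<bullet> x + d"
  using quad_scale[of A c d "-1" x] by simp

lemma quad_zero: "quad A c d 0 = d"
  unfolding quad_def by simp

theorem corollary1:
  fixes m :: nat
    and A :: "nat \<Rightarrow> real^'n^'n" and c :: "nat \<Rightarrow> real^'n" and d :: "nat \<Rightarrow> real"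
    and U :: "nat \<Rightarrow> real"
  assumes "m \<ge> 2" and "CARD('n) \<ge> 2"
    and sym: "\<And>i. 1 \<le> i \<Longrightarrow> i \<le> m \<Longrightarrow> transpose (A i) = A i"
    and f1: "\<And>x. quad (A 1) (c 1) (d 1) x = norm x ^ 2 - 1"
    and Upos: "\<And>i. 2 \<le> i \<Longrightarrow> i \<le> m \<Longrightarrow> U i > 0"
    and Ubnd: "\<And>i x. 2 \<le> i \<Longrightarrow> i \<le> m \<Longrightarrow> norm x ^ 2 \<le> 2 \<Longrightarrow>
                 \<bar>quad (A i) (c i) (d i) x\<bar> \<le> U i"
  shows "(\<exists>x. \<forall>i\<in>{1..m}. quad (A i) (c i) (d i) x \<le> 0) \<longleftrightarrow>
         (\<exists>(v0::real) (x::real^'n) (s::nat \<Rightarrow> real) (w::nat \<Rightarrow> real).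
            (\<forall>i\<in>{1..m}. x \<bullet> (A i *v x) + v0 * (c i \<bullet> x) + d i * v0 ^ 2 + (s i) ^ 2 = 0) \<and>
            (\<forall>i\<in>{2..m}. ((s i) ^ 2 + (w i) ^ 2) / U i - v0 ^ 2 = 0) \<and>
            norm x ^ 2 + (s 1) ^ 2 + (\<Sum>i=2..m. ((s i) ^ 2 + (w i) ^ 2) / U i) + v0 ^ 2
              = real m + 1)"
proof
  assume "\<exists>x. \<forall>i\<in>{1..m}. quad (A i) (c i) (d i) x \<le> 0"
  then obtain x where hx: "\<And>i. i \<in> {1..m} \<Longrightarrow> quad (A i) (c i) (d i) x \<le> 0" by blast
  define q where "q i = quad (A i) (c i) (d i) x" for i
  have h1: "q 1 \<le> 0" using hx \<open>m \<ge> 2\<close> unfolding q_def by auto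
  hence nx: "norm x ^ 2 \<le> 2" using f1[of x] unfolding q_def by simp
  define s where "s i = sqrt (- q i)" for i
  define w where "w i = sqrt (U i + q i)" for i
  have s2: "s i ^ 2 = - q i" if "i \<in> {1..m}" for i
    using hx[OF that] unfolding s_def q_def by simp
  have w2: "w i ^ 2 = U i + q i" if "i \<in> {2..m}" for i
  proof -
    have "\<bar>q i\<bar> \<le> U i" using Ubnd[of i x] that nx unfolding q_def by auto
    thus ?thesis unfolding w_def by simp
  qed
  have e2: "((s i) ^ 2 + (w i) ^ 2) / U i = 1" if "i \<in> {2..m}" for i
  proof -
    have "i \<in> {1..m}" using that by auto
    thus ?thesis using s2 w2[OF that] Upos[of i] that by auto
  qed
  have sumeq: "(\<Sum>i=2..m. ((s i) ^ 2 + (w i) ^ 2) / U i) = real m - 1"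
  proof -
    have "(\<Sum>i=2..m. ((s i) ^ 2 + (w i) ^ 2) / U i) = (\<Sum>i=2..m. (1::real))"
      using e2 by (rule sum.cong[OF refl])
    also have "\<dots> = real m - 1" using \<open>m \<ge> 2\<close> by (simp add: of_nat_diff)
    finally show ?thesis .
  qed
  have "s 1 ^ 2 = 1 - norm x ^ 2" using s2[of 1] \<open>m \<ge> 2\<close> f1[of x] unfolding q_def by auto
  show "\<exists>(v0::real) (x::real^'n) (s::nat \<Rightarrow> real) (w::nat \<Rightarrow> real).
            (\<forall>i\<in>{1..m}. x \<bullet> (A i *v x) + v0 * (c i \<bullet> x) + d i * v0 ^ 2 + (s i) ^ 2 = 0) \<and>
            (\<forall>i\<in>{2..m}. ((s i) ^ 2 + (w i) ^ 2) / U i - v0 ^ 2 = 0) \<and>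
            norm x ^ 2 + (s 1) ^ 2 + (\<Sum>i=2..m. ((s i) ^ 2 + (w i) ^ 2) / U i) + v0 ^ 2
              = real m + 1"
    apply (rule exI[of _ 1], rule exI[of _ x], rule exI[of _ s], rule exI[of _ w])
  proof (intro conjI ballI)
    fix i assume i: "i \<in> {1..m}"
    show "x \<bullet> (A i *v x) + 1 * (c i \<bullet> x) + d i * 1 ^ 2 + (s i)\<^sup>2 = 0"
      using s2[OF i] unfolding q_def quad_def by simp
  next
    fix i assume i: "i \<in> {2..m}"
    show "((s i)\<^sup>2 + (w i)\<^sup>2) / U i - 1 ^ 2 = 0" proof - have h: "((s i)\<^sup>2 + (w i)\<^sup>2) / U i = 1" by (rule e2[OF i]) show ?thesis unfolding h by simp qed
  next
    show "(norm x)\<^sup>2 + (s 1)\<^sup>2 + (\<Sum>i = 2..m. ((s i)\<^sup>2 + (w i)\<^sup>2) / U i) + 1 ^ 2 = real m + 1"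
      using sumeq \<open>s 1 ^ 2 = 1 - norm x ^ 2\<close> by simp
  qed
next
  assume "\<exists>(v0::real) (x::real^'n) (s::nat \<Rightarrow> real) (w::nat \<Rightarrow> real).
            (\<forall>i\<in>{1..m}. x \<bullet> (A i *v x) + v0 * (c i \<bullet> x) + d i * v0 ^ 2 + (s i) ^ 2 = 0) \<and>
            (\<forall>i\<in>{2..m}. ((s i) ^ 2 + (w i) ^ 2) / U i - v0 ^ 2 = 0) \<and>
            norm x ^ 2 + (s 1) ^ 2 + (\<Sum>i=2..m. ((s i) ^ 2 + (w i) ^ 2) / U i) + v0 ^ 2
              = real m + 1"
  then obtain v0 x s w where
    E1: "\<And>i. i\<in>{1..m} \<Longrightarrow> x \<bullet> (A i *v x) + v0 * (c i \<bullet> x) + d i * v0 ^ 2 + (s i) ^ 2 = 0"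
    and E2: "\<And>i. i\<in>{2..m} \<Longrightarrow> ((s i) ^ 2 + (w i) ^ 2) / U i - v0 ^ 2 = 0"
    and E3: "norm x ^ 2 + (s 1) ^ 2 + (\<Sum>i=2..m. ((s i) ^ 2 + (w i) ^ 2) / U i) + v0 ^ 2
              = real m + 1" by blast
  have d1: "d 1 = -1" using f1[of 0] by (simp add: quad_zero)
  have a: "x \<bullet> (A 1 *v x) + c 1 \<bullet> x + d 1 = norm x ^ 2 - 1" using f1[of x] by (simp add: quad_def)
  have b: "x \<bullet> (A 1 *v x) - c 1 \<bullet> x + d 1 = norm x ^ 2 - 1" using f1[of "-x"] by (simp add: quad_neg)
  have c1: "c 1 \<bullet> x = 0" and q1: "x \<bullet> (A 1 *v x) = norm x ^ 2" using a b d1 by linarith+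
  have i1: "norm x ^ 2 + s 1 ^ 2 = v0 ^ 2" using E1[of 1] \<open>m \<ge> 2\<close> c1 q1 d1 by auto
  have "(\<Sum>i=2..m. ((s i) ^ 2 + (w i) ^ 2) / U i) = (\<Sum>i=2..m. v0 ^ 2)"
    using E2 by (intro sum.cong) auto
  also have "\<dots> = (real m - 1) * v0 ^ 2" using \<open>m \<ge> 2\<close> by (simp add: of_nat_diff)
  finally have "(real m + 1) * v0 ^ 2 = real m + 1" using E3 i1 by (simp add: algebra_simps)
  hence "(real m + 1) * (v0 ^ 2 - 1) = 0" by (simp add: algebra_simps)
  moreover have "real m + 1 \<noteq> 0" by simp
  ultimately have v2: "v0 ^ 2 = 1" by simp
  hence vv: "v0 = 1 \<or> v0 = -1" by (simp add: power2_eq_1_iff)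
  show "\<exists>x. \<forall>i\<in>{1..m}. quad (A i) (c i) (d i) x \<le> 0"
  proof (rule exI[of _ "v0 *\<^sub>R x"], intro ballI)
    fix i assume i: "i \<in> {1..m}"
    have "quad (A i) (c i) (d i) (v0 *\<^sub>R x) = - (s i ^ 2)"
      using E1[OF i] by (simp add: quad_scale v2)
    thus "quad (A i) (c i) (d i) (v0 *\<^sub>R x) \<le> 0" by simp
  qed
qed

end
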